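(* Let $\mathcal C$ be a cartesian closed category with regular epi-mono factorizations (every arrow factors as a regular epimorphism followed by a monomorphism), and let $S$ be an object of $\mathcal C$ having at least one global element $1\to S$. Then the functor $U:\mathcal C\to\mathcal C$, $X\mapsto X^S$, is monadic: the comparison functor $K:\mathcal C\to\mathbf{Alg}^T$, $KY=(Y^S,\epsilon_Y^S)$, $Kg=g^S$, is an equivalence of categories, where $T=UF$ is the state monad of the adjunction $F\dashv U$ with $F(X)=S\times X$.
   Context: $TX=(S\times X)^S$; $\epsilon_Z:S\times Z^S\to Z$ is evaluation (the counit); for $f:S\times X\to Z$, $f^*:X\to Z^S$ is its transpose; $\eta_X=(\mathrm{id}_{S\times X})^*$, $\mu_X=(\epsilon_{S\times X})^S$. A $T$-algebra is a pair $(X,h)$ with $h:TX\to X$, $h\circ Th=h\circ\mu_X$, $h\circ\eta_X=\mathrm{id}_X$; morphisms $u:(X,h)\to(X',h')$ satisfy $h'\circ Tu=u\circ h$; these form $\mathbf{Alg}^T$. "Monadic" means $K$ is an equivalence of categories (not necessarily an isomorphism). *)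

theory Defs
  imports Main
begin

text \<open>A category: objects Obj, hom-sets Hom X Y, composition Cmp X Y Z g f (= g o f for
 f : X -> Y, g : Y -> Z), identities Idt X.\<close>

record ('o, 'a) cat =
  Obj :: "'o set"
  Hom :: "'o \<Rightarrow> 'o \<Rightarrow> 'a set"
  Cmp :: "'o \<Rightarrow> 'o \<Rightarrow> 'o \<Rightarrow> 'a \<Rightarrow> 'a \<Rightarrow> 'a"
  Idt :: "'o \<Rightarrow> 'a"

definition category :: "('o, 'a) cat \<Rightarrow> bool" where
  "category C \<longleftrightarrow>
     (\<forall>X\<in>Obj C. Idt C X \<in> Hom C X X) \<and>
     (\<forall>X\<in>Obj C. \<forall>Y\<in>Obj C. \<forall>Z\<in>Obj C. \<forall>f g.
        f \<in> Hom C X Y \<longrightarrow> g \<in> Hom C Y Z \<longrightarrow> Cmp C X Y Z g f \<in> Hom C X Z) \<and>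
     (\<forall>X\<in>Obj C. \<forall>Y\<in>Obj C. \<forall>f\<in>Hom C X Y.
        Cmp C X Y Y (Idt C Y) f = f \<and> Cmp C X X Y f (Idt C X) = f) \<and>
     (\<forall>W\<in>Obj C. \<forall>X\<in>Obj C. \<forall>Y\<in>Obj C. \<forall>Z\<in>Obj C. \<forall>f g h.
        f \<in> Hom C W X \<longrightarrow> g \<in> Hom C X Y \<longrightarrow> h \<in> Hom C Y Z \<longrightarrow>
        Cmp C W Y Z h (Cmp C W X Y g f) = Cmp C W X Z (Cmp C X Y Z h g) f)"

definition is_functor :: "('o, 'a) cat \<Rightarrow> ('p, 'b) cat \<Rightarrow> ('o \<Rightarrow> 'p) \<Rightarrow> ('o \<Rightarrow> 'o \<Rightarrow> 'a \<Rightarrow> 'b) \<Rightarrow> bool" where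
  "is_functor C D Fo Fa \<longleftrightarrow>
     (\<forall>X\<in>Obj C. Fo X \<in> Obj D) \<and>
     (\<forall>X\<in>Obj C. \<forall>Y\<in>Obj C. \<forall>f\<in>Hom C X Y. Fa X Y f \<in> Hom D (Fo X) (Fo Y)) \<and>
     (\<forall>X\<in>Obj C. Fa X X (Idt C X) = Idt D (Fo X)) \<and>
     (\<forall>X\<in>Obj C. \<forall>Y\<in>Obj C. \<forall>Z\<in>Obj C. \<forall>f g.
        f \<in> Hom C X Y \<longrightarrow> g \<in> Hom C Y Z \<longrightarrow>
        Fa X Z (Cmp C X Y Z g f) = Cmp D (Fo X) (Fo Y) (Fo Z) (Fa Y Z g) (Fa X Y f))"

definition iso :: "('o, 'a) cat \<Rightarrow> 'o \<Rightarrow> 'o \<Rightarrow> 'a \<Rightarrow> bool" where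
  "iso C X Y f \<longleftrightarrow> f \<in> Hom C X Y \<and>
     (\<exists>g\<in>Hom C Y X. Cmp C X Y X g f = Idt C X \<and> Cmp C Y X Y f g = Idt C Y)"

definition nat_iso :: "('o, 'a) cat \<Rightarrow> ('p, 'b) cat \<Rightarrow>
    ('o \<Rightarrow> 'p) \<Rightarrow> ('o \<Rightarrow> 'o \<Rightarrow> 'a \<Rightarrow> 'b) \<Rightarrow>
    ('o \<Rightarrow> 'p) \<Rightarrow> ('o \<Rightarrow> 'o \<Rightarrow> 'a \<Rightarrow> 'b) \<Rightarrow> ('o \<Rightarrow> 'b) \<Rightarrow> bool" where
  "nat_iso C D Fo Fa Go Ga \<alpha> \<longleftrightarrow>
     (\<forall>X\<in>Obj C. iso D (Fo X) (Go X) (\<alpha> X)) \<and>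
     (\<forall>X\<in>Obj C. \<forall>Y\<in>Obj C. \<forall>f\<in>Hom C X Y.
        Cmp D (Fo X) (Go X) (Go Y) (Ga X Y f) (\<alpha> X) =
        Cmp D (Fo X) (Fo Y) (Go Y) (\<alpha> Y) (Fa X Y f))"

definition equivalence :: "('o, 'a) cat \<Rightarrow> ('p, 'b) cat \<Rightarrow> ('o \<Rightarrow> 'p) \<Rightarrow> ('o \<Rightarrow> 'o \<Rightarrow> 'a \<Rightarrow> 'b) \<Rightarrow> bool" where
  "equivalence C D Fo Fa \<longleftrightarrow> is_functor C D Fo Fa \<and>
     (\<exists>(Go :: 'p \<Rightarrow> 'o) (Ga :: 'p \<Rightarrow> 'p \<Rightarrow> 'b \<Rightarrow> 'a) (\<alpha> :: 'o \<Rightarrow> 'a) (\<beta> :: 'p \<Rightarrow> 'b).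
        is_functor D C Go Ga \<and>
        nat_iso C C (\<lambda>X. X) (\<lambda>X Y f. f) (\<lambda>X. Go (Fo X)) (\<lambda>X Y f. Ga (Fo X) (Fo Y) (Fa X Y f)) \<alpha> \<and>
        nat_iso D D (\<lambda>X. Fo (Go X)) (\<lambda>X Y f. Fa (Go X) (Go Y) (Ga X Y f)) (\<lambda>X. X) (\<lambda>X Y f. f) \<beta>)"

definition mono :: "('o, 'a) cat \<Rightarrow> 'o \<Rightarrow> 'o \<Rightarrow> 'a \<Rightarrow> bool" where
  "mono C A B m \<longleftrightarrow> m \<in> Hom C A B \<and>
     (\<forall>X\<in>Obj C. \<forall>g\<in>Hom C X A. \<forall>h\<in>Hom C X A. Cmp C X A B m g = Cmp C X A B m h \<longrightarrow> g = h)"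

definition regular_epi :: "('o, 'a) cat \<Rightarrow> 'o \<Rightarrow> 'o \<Rightarrow> 'a \<Rightarrow> bool" where
  "regular_epi C B E e \<longleftrightarrow> e \<in> Hom C B E \<and>
     (\<exists>A\<in>Obj C. \<exists>f\<in>Hom C A B. \<exists>g\<in>Hom C A B.
        Cmp C A B E e f = Cmp C A B E e g \<and>
        (\<forall>Z\<in>Obj C. \<forall>k\<in>Hom C B Z. Cmp C A B Z k f = Cmp C A B Z k g \<longrightarrow>
           (\<exists>!u. u \<in> Hom C E Z \<and> Cmp C B E Z u e = k)))"

definition has_regular_epi_mono_factorizations :: "('o, 'a) cat \<Rightarrow> bool" where
  "has_regular_epi_mono_factorizations C \<longleftrightarrow>
     (\<forall>A\<in>Obj C. \<forall>B\<in>Obj C. \<forall>f\<in>Hom C A B.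
        \<exists>E\<in>Obj C. \<exists>e m. regular_epi C A E e \<and> mono C E B m \<and> Cmp C A E B m e = f)"

text \<open>prd A B = A \<times> B with projections pr1, pr2; ex Y Z = Z^Y with evaluation
  evl Y Z : Y \<times> Z^Y -> Z.\<close>
record ('o, 'a) ccc_data =
  one :: 'o
  prd :: "'o \<Rightarrow> 'o \<Rightarrow> 'o"
  pr1 :: "'o \<Rightarrow> 'o \<Rightarrow> 'a"
  pr2 :: "'o \<Rightarrow> 'o \<Rightarrow> 'a"
  ex  :: "'o \<Rightarrow> 'o \<Rightarrow> 'o"
  evl :: "'o \<Rightarrow> 'o \<Rightarrow> 'a"

definition pair :: "('o, 'a) cat \<Rightarrow> ('o, 'a) ccc_data \<Rightarrow> 'o \<Rightarrow> 'o \<Rightarrow> 'o \<Rightarrow> 'a \<Rightarrow> 'a \<Rightarrow> 'a" where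
  "pair C D A B X f g = (THE h. h \<in> Hom C X (prd D A B) \<and>
      Cmp C X (prd D A B) A (pr1 D A B) h = f \<and> Cmp C X (prd D A B) B (pr2 D A B) h = g)"

definition prodmap :: "('o, 'a) cat \<Rightarrow> ('o, 'a) ccc_data \<Rightarrow> 'o \<Rightarrow> 'o \<Rightarrow> 'o \<Rightarrow> 'o \<Rightarrow> 'a \<Rightarrow> 'a \<Rightarrow> 'a" where
  "prodmap C D A B A' B' f g = pair C D A' B' (prd D A B)
      (Cmp C (prd D A B) A A' f (pr1 D A B)) (Cmp C (prd D A B) B B' g (pr2 D A B))"

definition cartesian_closed :: "('o, 'a) cat \<Rightarrow> ('o, 'a) ccc_data \<Rightarrow> bool" where
  "cartesian_closed C D \<longleftrightarrow>
     one D \<in> Obj C \<and> (\<forall>X\<in>Obj C. \<exists>!f. f \<in> Hom C X (one D)) \<and>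
     (\<forall>A\<in>Obj C. \<forall>B\<in>Obj C. prd D A B \<in> Obj C \<and>
        pr1 D A B \<in> Hom C (prd D A B) A \<and> pr2 D A B \<in> Hom C (prd D A B) B \<and>
        (\<forall>X\<in>Obj C. \<forall>f\<in>Hom C X A. \<forall>g\<in>Hom C X B.
           \<exists>!h. h \<in> Hom C X (prd D A B) \<and>
              Cmp C X (prd D A B) A (pr1 D A B) h = f \<and> Cmp C X (prd D A B) B (pr2 D A B) h = g)) \<and>
     (\<forall>Y\<in>Obj C. \<forall>Z\<in>Obj C. ex D Y Z \<in> Obj C \<and>
        evl D Y Z \<in> Hom C (prd D Y (ex D Y Z)) Z \<and>
        (\<forall>X\<in>Obj C. \<forall>f\<in>Hom C (prd D Y X) Z.
           \<exists>!g. g \<in> Hom C X (ex D Y Z) \<and>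
              Cmp C (prd D Y X) (prd D Y (ex D Y Z)) Z (evl D Y Z)
                 (prodmap C D Y X Y (ex D Y Z) (Idt C Y) g) = f))"

definition transp :: "('o, 'a) cat \<Rightarrow> ('o, 'a) ccc_data \<Rightarrow> 'o \<Rightarrow> 'o \<Rightarrow> 'o \<Rightarrow> 'a \<Rightarrow> 'a" where
  "transp C D Y X Z f = (THE g. g \<in> Hom C X (ex D Y Z) \<and>
      Cmp C (prd D Y X) (prd D Y (ex D Y Z)) Z (evl D Y Z)
         (prodmap C D Y X Y (ex D Y Z) (Idt C Y) g) = f)"

definition expmap :: "('o, 'a) cat \<Rightarrow> ('o, 'a) ccc_data \<Rightarrow> 'o \<Rightarrow> 'o \<Rightarrow> 'o \<Rightarrow> 'a \<Rightarrow> 'a" where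
  "expmap C D S Z Z' u = transp C D S (ex D S Z) Z'
      (Cmp C (prd D S (ex D S Z)) Z Z' u (evl D S Z))"

definition Tob :: "('o, 'a) ccc_data \<Rightarrow> 'o \<Rightarrow> 'o \<Rightarrow> 'o" where
  "Tob D S X = ex D S (prd D S X)"

definition Tar :: "('o, 'a) cat \<Rightarrow> ('o, 'a) ccc_data \<Rightarrow> 'o \<Rightarrow> 'o \<Rightarrow> 'o \<Rightarrow> 'a \<Rightarrow> 'a" where
  "Tar C D S X X' u = expmap C D S (prd D S X) (prd D S X') (prodmap C D S X S X' (Idt C S) u)"

definition unitT :: "('o, 'a) cat \<Rightarrow> ('o, 'a) ccc_data \<Rightarrow> 'o \<Rightarrow> 'o \<Rightarrow> 'a" where
  "unitT C D S X = transp C D S X (prd D S X) (Idt C (prd D S X))"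

definition multT :: "('o, 'a) cat \<Rightarrow> ('o, 'a) ccc_data \<Rightarrow> 'o \<Rightarrow> 'o \<Rightarrow> 'a" where
  "multT C D S X = expmap C D S (prd D S (Tob D S X)) (prd D S X) (evl D S (prd D S X))"

definition AlgT :: "('o, 'a) cat \<Rightarrow> ('o, 'a) ccc_data \<Rightarrow> 'o \<Rightarrow> ('o \<times> 'a, 'a) cat" where
  "AlgT C D S = \<lparr>
     Obj = {(X, h). X \<in> Obj C \<and> h \<in> Hom C (Tob D S X) X \<and>
              Cmp C (Tob D S (Tob D S X)) (Tob D S X) X h (Tar C D S (Tob D S X) X h) =
              Cmp C (Tob D S (Tob D S X)) (Tob D S X) X h (multT C D S X) \<and>
              Cmp C X (Tob D S X) X h (unitT C D S X) = Idt C X},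
     Hom = (\<lambda>(X, h) (X', h'). {u \<in> Hom C X X'.
              Cmp C (Tob D S X) (Tob D S X') X' h' (Tar C D S X X' u) =
              Cmp C (Tob D S X) X X' u h}),
     Cmp = (\<lambda>(X, h) (Y, k) (Z, l) g f. Cmp C X Y Z g f),
     Idt = (\<lambda>(X, h). Idt C X) \<rparr>"

definition Kob :: "('o, 'a) cat \<Rightarrow> ('o, 'a) ccc_data \<Rightarrow> 'o \<Rightarrow> 'o \<Rightarrow> 'o \<times> 'a" where
  "Kob C D S Y = (ex D S Y, expmap C D S (prd D S (ex D S Y)) Y (evl D S Y))"

definition Kar :: "('o, 'a) cat \<Rightarrow> ('o, 'a) ccc_data \<Rightarrow> 'o \<Rightarrow> 'o \<Rightarrow> 'o \<Rightarrow> 'a \<Rightarrow> 'a" where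
  "Kar C D S Y Y' g = expmap C D S Y Y' g"

end

theory Submission
  imports Defs
begin

locale catl = fixes C :: "('o, 'a) cat" assumes cat: "category C"
begin
lemma idt_hom[simp]: "X \<in> Obj C \<Longrightarrow> Idt C X \<in> Hom C X X"
  using cat unfolding category_def by blast
lemma cmp_hom[simp]: "X \<in> Obj C \<Longrightarrow> Y \<in> Obj C \<Longrightarrow> Z \<in> Obj C \<Longrightarrow> f \<in> Hom C X Y \<Longrightarrow> g \<in> Hom C Y Z
  \<Longrightarrow> Cmp C X Y Z g f \<in> Hom C X Z"
  using cat unfolding category_def by blast
lemma idl[simp]: "X \<in> Obj C \<Longrightarrow> Y \<in> Obj C \<Longrightarrow> f \<in> Hom C X Y \<Longrightarrow> Cmp C X Y Y (Idt C Y) f = f"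
  using cat unfolding category_def by blast
lemma idr[simp]: "X \<in> Obj C \<Longrightarrow> Y \<in> Obj C \<Longrightarrow> f \<in> Hom C X Y \<Longrightarrow> Cmp C X X Y f (Idt C X) = f"
  using cat unfolding category_def by blast
lemma assoc[simp]: "W \<in> Obj C \<Longrightarrow> X \<in> Obj C \<Longrightarrow> Y \<in> Obj C \<Longrightarrow> Z \<in> Obj C \<Longrightarrow>
  f \<in> Hom C W X \<Longrightarrow> g \<in> Hom C X Y \<Longrightarrow> h \<in> Hom C Y Z \<Longrightarrow>
  Cmp C W X Z (Cmp C X Y Z h g) f = Cmp C W Y Z h (Cmp C W X Y g f)"
  using cat unfolding category_def by metis
lemma cancel: "W \<in> Obj C \<Longrightarrow> X \<in> Obj C \<Longrightarrow> Y \<in> Obj C \<Longrightarrow> 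
  f \<in> Hom C W X \<Longrightarrow> g \<in> Hom C X Y \<Longrightarrow> h \<in> Hom C Y X \<Longrightarrow> Cmp C X Y X h g = Idt C X \<Longrightarrow>
  Cmp C W Y X h (Cmp C W X Y g f) = f"
  by (metis assoc idl)
end

lemma equiv_ffe:
  fixes C :: "('o, 'a) cat" and B :: "('p, 'b) cat"
  assumes cC: "category C" and cB: "category B" and F: "is_functor C B Fo Fa"
  and faithful: "\<forall>X\<in>Obj C. \<forall>Y\<in>Obj C. \<forall>f\<in>Hom C X Y. \<forall>g\<in>Hom C X Y. Fa X Y f = Fa X Y g \<longrightarrow> f = g"
  and full: "\<forall>X\<in>Obj C. \<forall>Y\<in>Obj C. \<forall>g\<in>Hom B (Fo X) (Fo Y). \<exists>f\<in>Hom C X Y. Fa X Y f = g"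
  and eso: "\<forall>b\<in>Obj B. \<exists>X\<in>Obj C. \<exists>\<phi>. iso B (Fo X) b \<phi>"
  shows "equivalence C B Fo Fa"
proof -
  interpret c: catl C by (rule catl.intro, rule cC)
  interpret b: catl B by (rule catl.intro, rule cB)
  have Fo: "\<And>X. X \<in> Obj C \<Longrightarrow> Fo X \<in> Obj B" using F unfolding is_functor_def by blast
  have Fa: "\<And>X Y f. X \<in> Obj C \<Longrightarrow> Y \<in> Obj C \<Longrightarrow> f \<in> Hom C X Y \<Longrightarrow> Fa X Y f \<in> Hom B (Fo X) (Fo Y)"
    using F unfolding is_functor_def by blast
  have Fid: "\<And>X. X \<in> Obj C \<Longrightarrow> Fa X X (Idt C X) = Idt B (Fo X)" using F unfolding is_functor_def by blast
  have Fc: "\<And>X Y Z f g. X \<in> Obj C \<Longrightarrow> Y \<in> Obj C \<Longrightarrow> Z \<in> Obj C \<Longrightarrow> f \<in> Hom C X Y \<Longrightarrow> g \<in> Hom C Y Z \<Longrightarrow>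
        Fa X Z (Cmp C X Y Z g f) = Cmp B (Fo X) (Fo Y) (Fo Z) (Fa Y Z g) (Fa X Y f)"
    using F unfolding is_functor_def by blast
  define Go where "Go b = (SOME X. X \<in> Obj C \<and> (\<exists>\<phi>. iso B (Fo X) b \<phi>))" for b
  define \<beta> where "\<beta> b = (SOME \<phi>. iso B (Fo (Go b)) b \<phi>)" for b
  define \<beta>i where "\<beta>i b = (SOME \<psi>. \<psi> \<in> Hom B b (Fo (Go b)) \<and>
      Cmp B (Fo (Go b)) b (Fo (Go b)) \<psi> (\<beta> b) = Idt B (Fo (Go b)) \<and> Cmp B b (Fo (Go b)) b (\<beta> b) \<psi> = Idt B b)" for b
  define pre where "pre X Y g = (THE f. f \<in> Hom C X Y \<and> Fa X Y f = g)" for X Y g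
  have Go: "\<And>b. b \<in> Obj B \<Longrightarrow> Go b \<in> Obj C \<and> (\<exists>\<phi>. iso B (Fo (Go b)) b \<phi>)"
    unfolding Go_def by (rule someI_ex) (use eso in blast)
  have \<beta>: "\<And>b. b \<in> Obj B \<Longrightarrow> iso B (Fo (Go b)) b (\<beta> b)"
    unfolding \<beta>_def by (rule someI_ex) (use Go in blast)
  have \<beta>i: "\<And>b. b \<in> Obj B \<Longrightarrow> \<beta>i b \<in> Hom B b (Fo (Go b)) \<and>
      Cmp B (Fo (Go b)) b (Fo (Go b)) (\<beta>i b) (\<beta> b) = Idt B (Fo (Go b)) \<and> Cmp B b (Fo (Go b)) b (\<beta> b) (\<beta>i b) = Idt B b"
    unfolding \<beta>i_def by (rule someI_ex) (use \<beta> in \<open>auto simp: iso_def\<close>)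
  have GoO[simp]: "\<And>b. b \<in> Obj B \<Longrightarrow> Go b \<in> Obj C" using Go by blast
  have FoO[simp]: "\<And>X. X \<in> Obj C \<Longrightarrow> Fo X \<in> Obj B" by (rule Fo)
  have FaH[simp]: "\<And>X Y f. X \<in> Obj C \<Longrightarrow> Y \<in> Obj C \<Longrightarrow> f \<in> Hom C X Y \<Longrightarrow> Fa X Y f \<in> Hom B (Fo X) (Fo Y)"
    by (rule Fa)
  have \<beta>H[simp]: "\<And>b. b \<in> Obj B \<Longrightarrow> \<beta> b \<in> Hom B (Fo (Go b)) b" using \<beta> unfolding iso_def by blast
  have \<beta>iH[simp]: "\<And>b. b \<in> Obj B \<Longrightarrow> \<beta>i b \<in> Hom B b (Fo (Go b))" using \<beta>i by blast
  have \<beta>1[simp]: "\<And>b. b \<in> Obj B \<Longrightarrow> Cmp B (Fo (Go b)) b (Fo (Go b)) (\<beta>i b) (\<beta> b) = Idt B (Fo (Go b))" using \<beta>i by blast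
  have \<beta>2[simp]: "\<And>b. b \<in> Obj B \<Longrightarrow> Cmp B b (Fo (Go b)) b (\<beta> b) (\<beta>i b) = Idt B b" using \<beta>i by blast
  have \<beta>1'[simp]: "\<And>b V f. b \<in> Obj B \<Longrightarrow> V \<in> Obj B \<Longrightarrow> f \<in> Hom B V (Fo (Go b)) \<Longrightarrow>
     Cmp B V b (Fo (Go b)) (\<beta>i b) (Cmp B V (Fo (Go b)) b (\<beta> b) f) = f"
    by (rule b.cancel) auto
  have \<beta>2'[simp]: "\<And>b V f. b \<in> Obj B \<Longrightarrow> V \<in> Obj B \<Longrightarrow> f \<in> Hom B V b \<Longrightarrow>
     Cmp B V (Fo (Go b)) b (\<beta> b) (Cmp B V b (Fo (Go b)) (\<beta>i b) f) = f"
    by (rule b.cancel) auto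
  have pre: "\<And>X Y g. X \<in> Obj C \<Longrightarrow> Y \<in> Obj C \<Longrightarrow> g \<in> Hom B (Fo X) (Fo Y) \<Longrightarrow>
      pre X Y g \<in> Hom C X Y \<and> Fa X Y (pre X Y g) = g"
  proof -
    fix X Y g assume a: "X \<in> Obj C" "Y \<in> Obj C" "g \<in> Hom B (Fo X) (Fo Y)"
    have "\<exists>!f. f \<in> Hom C X Y \<and> Fa X Y f = g" using full faithful a by metis
    then show "pre X Y g \<in> Hom C X Y \<and> Fa X Y (pre X Y g) = g" unfolding pre_def by (rule theI')
  qed
  have preH[simp]: "\<And>X Y g. X \<in> Obj C \<Longrightarrow> Y \<in> Obj C \<Longrightarrow> g \<in> Hom B (Fo X) (Fo Y) \<Longrightarrow> pre X Y g \<in> Hom C X Y"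
    using pre by blast
  have preF[simp]: "\<And>X Y g. X \<in> Obj C \<Longrightarrow> Y \<in> Obj C \<Longrightarrow> g \<in> Hom B (Fo X) (Fo Y) \<Longrightarrow> Fa X Y (pre X Y g) = g"
    using pre by blast
  have feq: "\<And>X Y f g. X \<in> Obj C \<Longrightarrow> Y \<in> Obj C \<Longrightarrow> f \<in> Hom C X Y \<Longrightarrow> g \<in> Hom C X Y \<Longrightarrow> Fa X Y f = Fa X Y g \<Longrightarrow> f = g"
    using faithful by blast
  define Ga where "Ga b b' g = pre (Go b) (Go b') (Cmp B (Fo (Go b)) b' (Fo (Go b')) (\<beta>i b') (Cmp B (Fo (Go b)) b b' g (\<beta> b)))" for b b' g
  define \<alpha> where "\<alpha> X = pre X (Go (Fo X)) (\<beta>i (Fo X))" for X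
  define \<alpha>i where "\<alpha>i X = pre (Go (Fo X)) X (\<beta> (Fo X))" for X
  have GaH[simp]: "\<And>b b' g. b \<in> Obj B \<Longrightarrow> b' \<in> Obj B \<Longrightarrow> g \<in> Hom B b b' \<Longrightarrow> Ga b b' g \<in> Hom C (Go b) (Go b')"
    unfolding Ga_def by simp
  have GaF[simp]: "\<And>b b' g. b \<in> Obj B \<Longrightarrow> b' \<in> Obj B \<Longrightarrow> g \<in> Hom B b b' \<Longrightarrow> Fa (Go b) (Go b') (Ga b b' g) =
     Cmp B (Fo (Go b)) b' (Fo (Go b')) (\<beta>i b') (Cmp B (Fo (Go b)) b b' g (\<beta> b))"
    unfolding Ga_def by simp
  have \<alpha>H[simp]: "\<And>X. X \<in> Obj C \<Longrightarrow> \<alpha> X \<in> Hom C X (Go (Fo X))" unfolding \<alpha>_def by simp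
  have \<alpha>iH[simp]: "\<And>X. X \<in> Obj C \<Longrightarrow> \<alpha>i X \<in> Hom C (Go (Fo X)) X" unfolding \<alpha>i_def by simp
  have \<alpha>F[simp]: "\<And>X. X \<in> Obj C \<Longrightarrow> Fa X (Go (Fo X)) (\<alpha> X) = \<beta>i (Fo X)" unfolding \<alpha>_def by simp
  have \<alpha>iF[simp]: "\<And>X. X \<in> Obj C \<Longrightarrow> Fa (Go (Fo X)) X (\<alpha>i X) = \<beta> (Fo X)" unfolding \<alpha>i_def by simp
  have G: "is_functor B C Go Ga"
    unfolding is_functor_def
  proof (intro conjI ballI allI impI)
    fix b assume b: "b \<in> Obj B"
    show "Ga b b (Idt B b) = Idt C (Go b)" by (rule feq[of "Go b" "Go b"]) (simp_all add: b Fid)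
  next
    fix X Y Z f g assume a: "X \<in> Obj B" "Y \<in> Obj B" "Z \<in> Obj B" "f \<in> Hom B X Y" "g \<in> Hom B Y Z"
    show "Ga X Z (Cmp B X Y Z g f) = Cmp C (Go X) (Go Y) (Go Z) (Ga Y Z g) (Ga X Y f)"
      by (rule feq[of "Go X" "Go Z"]) (simp_all add: a Fc)
  qed auto
  have N1: "nat_iso C C (\<lambda>X. X) (\<lambda>X Y f. f) (\<lambda>X. Go (Fo X)) (\<lambda>X Y f. Ga (Fo X) (Fo Y) (Fa X Y f)) \<alpha>"
    unfolding nat_iso_def iso_def
  proof (intro conjI ballI)
    fix X assume X: "X \<in> Obj C"
    show "\<alpha> X \<in> Hom C X (Go (Fo X))" using X by simp
    show "\<exists>g\<in>Hom C (Go (Fo X)) X. Cmp C X (Go (Fo X)) X g (\<alpha> X) = Idt C X \<and>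
          Cmp C (Go (Fo X)) X (Go (Fo X)) (\<alpha> X) g = Idt C (Go (Fo X))"
    proof (intro bexI conjI)
      show "Cmp C X (Go (Fo X)) X (\<alpha>i X) (\<alpha> X) = Idt C X" by (rule feq[of X X]) (simp_all add: X Fc Fid)
      show "Cmp C (Go (Fo X)) X (Go (Fo X)) (\<alpha> X) (\<alpha>i X) = Idt C (Go (Fo X))" by (rule feq[of "Go (Fo X)" "Go (Fo X)"]) (simp_all add: X Fc Fid)
    qed (simp add: X)
  next
    fix X Y f assume a: "X \<in> Obj C" "Y \<in> Obj C" "f \<in> Hom C X Y"
    show "Cmp C X (Go (Fo X)) (Go (Fo Y)) (Ga (Fo X) (Fo Y) (Fa X Y f)) (\<alpha> X) = Cmp C X Y (Go (Fo Y)) (\<alpha> Y) f"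
      by (rule feq[of X "Go (Fo Y)"]) (simp_all add: a Fc)
  qed
  have N2: "nat_iso B B (\<lambda>X. Fo (Go X)) (\<lambda>X Y f. Fa (Go X) (Go Y) (Ga X Y f)) (\<lambda>X. X) (\<lambda>X Y f. f) \<beta>"
    unfolding nat_iso_def
  proof (intro conjI ballI)
    fix b assume "b \<in> Obj B" then show "iso B (Fo (Go b)) b (\<beta> b)" by (rule \<beta>)
  next
    fix X Y f assume a: "X \<in> Obj B" "Y \<in> Obj B" "f \<in> Hom B X Y"
    show "Cmp B (Fo (Go X)) X Y f (\<beta> X) = Cmp B (Fo (Go X)) (Fo (Go Y)) Y (\<beta> Y) (Fa (Go X) (Go Y) (Ga X Y f))"
      using a by simp
  qed
  show ?thesis unfolding equivalence_def using F G N1 N2 by blast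
qed

definition trm :: "('o, 'a) cat \<Rightarrow> ('o, 'a) ccc_data \<Rightarrow> 'o \<Rightarrow> 'a" where
  "trm C D X = (THE f. f \<in> Hom C X (one D))"

locale cc =
  fixes C :: "('o, 'a) cat" and D :: "('o, 'a) ccc_data"
  assumes cat: "category C" and ccc: "cartesian_closed C D"
begin

lemma idt_hom[simp]: "X \<in> Obj C \<Longrightarrow> Idt C X \<in> Hom C X X"
  using cat unfolding category_def by blast

lemma cmp_hom[simp]: "X \<in> Obj C \<Longrightarrow> Y \<in> Obj C \<Longrightarrow> Z \<in> Obj C \<Longrightarrow> f \<in> Hom C X Y \<Longrightarrow> g \<in> Hom C Y Z
  \<Longrightarrow> Cmp C X Y Z g f \<in> Hom C X Z"
  using cat unfolding category_def by blast

lemma idl[simp]: "X \<in> Obj C \<Longrightarrow> Y \<in> Obj C \<Longrightarrow> f \<in> Hom C X Y \<Longrightarrow> Cmp C X Y Y (Idt C Y) f = f"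
  using cat unfolding category_def by blast

lemma idr[simp]: "X \<in> Obj C \<Longrightarrow> Y \<in> Obj C \<Longrightarrow> f \<in> Hom C X Y \<Longrightarrow> Cmp C X X Y f (Idt C X) = f"
  using cat unfolding category_def by blast

lemma assoc[simp]: "W \<in> Obj C \<Longrightarrow> X \<in> Obj C \<Longrightarrow> Y \<in> Obj C \<Longrightarrow> Z \<in> Obj C \<Longrightarrow>
  f \<in> Hom C W X \<Longrightarrow> g \<in> Hom C X Y \<Longrightarrow> h \<in> Hom C Y Z \<Longrightarrow>
  Cmp C W X Z (Cmp C X Y Z h g) f = Cmp C W Y Z h (Cmp C W X Y g f)"
  using cat unfolding category_def by metis

lemma one_obj[simp]: "one D \<in> Obj C" using ccc unfolding cartesian_closed_def by blast
lemma prd_obj[simp]: "A \<in> Obj C \<Longrightarrow> B \<in> Obj C \<Longrightarrow> prd D A B \<in> Obj C"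
  using ccc unfolding cartesian_closed_def by blast
lemma ex_obj[simp]: "A \<in> Obj C \<Longrightarrow> B \<in> Obj C \<Longrightarrow> ex D A B \<in> Obj C"
  using ccc unfolding cartesian_closed_def by blast
lemma pr1_hom[simp]: "A \<in> Obj C \<Longrightarrow> B \<in> Obj C \<Longrightarrow> pr1 D A B \<in> Hom C (prd D A B) A"
  using ccc unfolding cartesian_closed_def by blast
lemma pr2_hom[simp]: "A \<in> Obj C \<Longrightarrow> B \<in> Obj C \<Longrightarrow> pr2 D A B \<in> Hom C (prd D A B) B"
  using ccc unfolding cartesian_closed_def by blast
lemma evl_hom[simp]: "A \<in> Obj C \<Longrightarrow> B \<in> Obj C \<Longrightarrow> evl D A B \<in> Hom C (prd D A (ex D A B)) B"
  using ccc unfolding cartesian_closed_def by blast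

lemma trm_hom[simp]: "X \<in> Obj C \<Longrightarrow> trm C D X \<in> Hom C X (one D)"
proof -
  assume "X \<in> Obj C"
  then have "\<exists>!f. f \<in> Hom C X (one D)" using ccc unfolding cartesian_closed_def by blast
  then show ?thesis unfolding trm_def by (rule theI')
qed

lemma trm_uniq: "X \<in> Obj C \<Longrightarrow> f \<in> Hom C X (one D) \<Longrightarrow> f = trm C D X"
proof -
  assume a: "X \<in> Obj C" "f \<in> Hom C X (one D)"
  then have "\<exists>!f. f \<in> Hom C X (one D)" using ccc unfolding cartesian_closed_def by blast
  then show ?thesis using a trm_hom by blast
qed

lemma trm_cmp[simp]: "V \<in> Obj C \<Longrightarrow> X \<in> Obj C \<Longrightarrow> a \<in> Hom C V X \<Longrightarrow>
  Cmp C V X (one D) (trm C D X) a = trm C D V"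
  by (rule trm_uniq) auto

lemma ccc_prod: "A \<in> Obj C \<Longrightarrow> B \<in> Obj C \<Longrightarrow> prd D A B \<in> Obj C \<and>
        pr1 D A B \<in> Hom C (prd D A B) A \<and> pr2 D A B \<in> Hom C (prd D A B) B \<and>
        (\<forall>X\<in>Obj C. \<forall>f\<in>Hom C X A. \<forall>g\<in>Hom C X B.
           \<exists>!h. h \<in> Hom C X (prd D A B) \<and>
              Cmp C X (prd D A B) A (pr1 D A B) h = f \<and> Cmp C X (prd D A B) B (pr2 D A B) h = g)"
  using ccc unfolding cartesian_closed_def by (elim conjE) (drule bspec, assumption, drule bspec, assumption)

lemma pair_ex: "A \<in> Obj C \<Longrightarrow> B \<in> Obj C \<Longrightarrow> X \<in> Obj C \<Longrightarrow> f \<in> Hom C X A \<Longrightarrow> g \<in> Hom C X B \<Longrightarrow>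
  \<exists>!h. h \<in> Hom C X (prd D A B) \<and>
              Cmp C X (prd D A B) A (pr1 D A B) h = f \<and> Cmp C X (prd D A B) B (pr2 D A B) h = g"
  using ccc_prod[of A B] by simp

lemma pair_prop: assumes "A \<in> Obj C" "B \<in> Obj C" "X \<in> Obj C" "f \<in> Hom C X A" "g \<in> Hom C X B"
  shows "pair C D A B X f g \<in> Hom C X (prd D A B) \<and>
     Cmp C X (prd D A B) A (pr1 D A B) (pair C D A B X f g) = f \<and>
     Cmp C X (prd D A B) B (pr2 D A B) (pair C D A B X f g) = g"
  unfolding pair_def by (rule theI'[OF pair_ex[OF assms]])

lemma pair_hom[simp]: "A \<in> Obj C \<Longrightarrow> B \<in> Obj C \<Longrightarrow> X \<in> Obj C \<Longrightarrow> f \<in> Hom C X A \<Longrightarrow> g \<in> Hom C X B \<Longrightarrow>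
   pair C D A B X f g \<in> Hom C X (prd D A B)"
  using pair_prop by blast
lemma pr1_pair[simp]: "A \<in> Obj C \<Longrightarrow> B \<in> Obj C \<Longrightarrow> X \<in> Obj C \<Longrightarrow> f \<in> Hom C X A \<Longrightarrow> g \<in> Hom C X B \<Longrightarrow>
   Cmp C X (prd D A B) A (pr1 D A B) (pair C D A B X f g) = f"
  using pair_prop by blast
lemma pr2_pair[simp]: "A \<in> Obj C \<Longrightarrow> B \<in> Obj C \<Longrightarrow> X \<in> Obj C \<Longrightarrow> f \<in> Hom C X A \<Longrightarrow> g \<in> Hom C X B \<Longrightarrow>
   Cmp C X (prd D A B) B (pr2 D A B) (pair C D A B X f g) = g"
  using pair_prop by blast

lemma pair_uniq: "A \<in> Obj C \<Longrightarrow> B \<in> Obj C \<Longrightarrow> X \<in> Obj C \<Longrightarrow> h \<in> Hom C X (prd D A B) \<Longrightarrow>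
   pair C D A B X (Cmp C X (prd D A B) A (pr1 D A B) h) (Cmp C X (prd D A B) B (pr2 D A B) h) = h"
  unfolding pair_def by (rule the1_equality[OF pair_ex]) auto

lemma pair_eqI: "A \<in> Obj C \<Longrightarrow> B \<in> Obj C \<Longrightarrow> X \<in> Obj C \<Longrightarrow> h \<in> Hom C X (prd D A B) \<Longrightarrow> k \<in> Hom C X (prd D A B) \<Longrightarrow>
   Cmp C X (prd D A B) A (pr1 D A B) h = Cmp C X (prd D A B) A (pr1 D A B) k \<Longrightarrow>
   Cmp C X (prd D A B) B (pr2 D A B) h = Cmp C X (prd D A B) B (pr2 D A B) k \<Longrightarrow> h = k"
  by (metis pair_uniq)

lemma pair_surj[simp]: "A \<in> Obj C \<Longrightarrow> B \<in> Obj C \<Longrightarrow> X \<in> Obj C \<Longrightarrow> h \<in> Hom C X (prd D A B) \<Longrightarrow>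
   pair C D A B X (Cmp C X (prd D A B) A (pr1 D A B) h) (Cmp C X (prd D A B) B (pr2 D A B) h) = h"
  by (rule pair_uniq)

lemma pair_id[simp]: "A \<in> Obj C \<Longrightarrow> B \<in> Obj C \<Longrightarrow>
   pair C D A B (prd D A B) (pr1 D A B) (pr2 D A B) = Idt C (prd D A B)"
  using pair_uniq[of A B "prd D A B" "Idt C (prd D A B)"] by simp

lemma pair_cmp[simp]: "A \<in> Obj C \<Longrightarrow> B \<in> Obj C \<Longrightarrow> X \<in> Obj C \<Longrightarrow> V \<in> Obj C \<Longrightarrow>
   f \<in> Hom C X A \<Longrightarrow> g \<in> Hom C X B \<Longrightarrow> a \<in> Hom C V X \<Longrightarrow>
   Cmp C V X (prd D A B) (pair C D A B X f g) a = pair C D A B V (Cmp C V X A f a) (Cmp C V X B g a)"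
  apply (rule pair_eqI[of A B V], simp_all)
  using assoc[of V X "prd D A B" A a "pair C D A B X f g" "pr1 D A B"]
    assoc[of V X "prd D A B" B a "pair C D A B X f g" "pr2 D A B"] by simp_all

lemma prodmap_eq[simp]: "prodmap C D A B A' B' f g = pair C D A' B' (prd D A B)
      (Cmp C (prd D A B) A A' f (pr1 D A B)) (Cmp C (prd D A B) B B' g (pr2 D A B))"
  by (simp add: prodmap_def)


lemma ccc_exp: "Y \<in> Obj C \<Longrightarrow> Z \<in> Obj C \<Longrightarrow> ex D Y Z \<in> Obj C \<and>
        evl D Y Z \<in> Hom C (prd D Y (ex D Y Z)) Z \<and>
        (\<forall>X\<in>Obj C. \<forall>f\<in>Hom C (prd D Y X) Z.
           \<exists>!g. g \<in> Hom C X (ex D Y Z) \<and>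
              Cmp C (prd D Y X) (prd D Y (ex D Y Z)) Z (evl D Y Z)
                 (prodmap C D Y X Y (ex D Y Z) (Idt C Y) g) = f)"
  using ccc unfolding cartesian_closed_def by (elim conjE) (drule bspec, assumption, drule bspec, assumption)

lemma tr_ex: "Y \<in> Obj C \<Longrightarrow> Z \<in> Obj C \<Longrightarrow> X \<in> Obj C \<Longrightarrow> f \<in> Hom C (prd D Y X) Z \<Longrightarrow>
  \<exists>!g. g \<in> Hom C X (ex D Y Z) \<and>
              Cmp C (prd D Y X) (prd D Y (ex D Y Z)) Z (evl D Y Z)
                 (prodmap C D Y X Y (ex D Y Z) (Idt C Y) g) = f"
  using ccc_exp[of Y Z] by (simp del: prodmap_eq)

lemma tr_prop: assumes "Y \<in> Obj C" "Z \<in> Obj C" "X \<in> Obj C" "f \<in> Hom C (prd D Y X) Z"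
  shows "transp C D Y X Z f \<in> Hom C X (ex D Y Z) \<and>
              Cmp C (prd D Y X) (prd D Y (ex D Y Z)) Z (evl D Y Z)
                 (prodmap C D Y X Y (ex D Y Z) (Idt C Y) (transp C D Y X Z f)) = f"
  unfolding transp_def by (rule theI'[OF tr_ex[OF assms]])

lemma tr_hom[simp]: "Y \<in> Obj C \<Longrightarrow> Z \<in> Obj C \<Longrightarrow> X \<in> Obj C \<Longrightarrow> f \<in> Hom C (prd D Y X) Z \<Longrightarrow>
   transp C D Y X Z f \<in> Hom C X (ex D Y Z)"
  using tr_prop by blast

lemma tr_beta0: "Y \<in> Obj C \<Longrightarrow> Z \<in> Obj C \<Longrightarrow> X \<in> Obj C \<Longrightarrow> f \<in> Hom C (prd D Y X) Z \<Longrightarrow>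
   Cmp C (prd D Y X) (prd D Y (ex D Y Z)) Z (evl D Y Z)
     (pair C D Y (ex D Y Z) (prd D Y X) (pr1 D Y X) (Cmp C (prd D Y X) X (ex D Y Z) (transp C D Y X Z f) (pr2 D Y X))) = f"
  using tr_prop[of Y Z X f] by simp

lemma tr_uniq: "Y \<in> Obj C \<Longrightarrow> Z \<in> Obj C \<Longrightarrow> X \<in> Obj C \<Longrightarrow> g \<in> Hom C X (ex D Y Z) \<Longrightarrow>
   Cmp C (prd D Y X) (prd D Y (ex D Y Z)) Z (evl D Y Z)
     (pair C D Y (ex D Y Z) (prd D Y X) (pr1 D Y X) (Cmp C (prd D Y X) X (ex D Y Z) g (pr2 D Y X))) = f \<Longrightarrow>
   g = transp C D Y X Z f"
proof -
  assume a: "Y \<in> Obj C" "Z \<in> Obj C" "X \<in> Obj C" "g \<in> Hom C X (ex D Y Z)"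
   "Cmp C (prd D Y X) (prd D Y (ex D Y Z)) Z (evl D Y Z)
     (pair C D Y (ex D Y Z) (prd D Y X) (pr1 D Y X) (Cmp C (prd D Y X) X (ex D Y Z) g (pr2 D Y X))) = f"
  then have f: "f \<in> Hom C (prd D Y X) Z" by (metis cmp_hom evl_hom ex_obj pair_hom pr1_hom pr2_hom prd_obj)
  show ?thesis unfolding transp_def by (rule the1_equality[OF tr_ex[OF a(1-3) f], symmetric]) (use a in simp)
qed

lemma tr_eta[simp]: "Y \<in> Obj C \<Longrightarrow> Z \<in> Obj C \<Longrightarrow> X \<in> Obj C \<Longrightarrow> g \<in> Hom C X (ex D Y Z) \<Longrightarrow>
   transp C D Y X Z (Cmp C (prd D Y X) (prd D Y (ex D Y Z)) Z (evl D Y Z)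
     (pair C D Y (ex D Y Z) (prd D Y X) (pr1 D Y X) (Cmp C (prd D Y X) X (ex D Y Z) g (pr2 D Y X)))) = g"
  by (rule tr_uniq[symmetric]) auto

lemma tr_evl[simp]: "Y \<in> Obj C \<Longrightarrow> Z \<in> Obj C \<Longrightarrow> transp C D Y (ex D Y Z) Z (evl D Y Z) = Idt C (ex D Y Z)"
  using tr_eta[of Y Z "ex D Y Z" "Idt C (ex D Y Z)"] by simp

lemma tr_inj: "Y \<in> Obj C \<Longrightarrow> Z \<in> Obj C \<Longrightarrow> X \<in> Obj C \<Longrightarrow> f \<in> Hom C (prd D Y X) Z \<Longrightarrow>
   g \<in> Hom C (prd D Y X) Z \<Longrightarrow> (transp C D Y X Z f = transp C D Y X Z g) = (f = g)"
  by (metis tr_beta0)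

lemma tr_cmp[simp]: "Y \<in> Obj C \<Longrightarrow> Z \<in> Obj C \<Longrightarrow> X \<in> Obj C \<Longrightarrow> V \<in> Obj C \<Longrightarrow>
   f \<in> Hom C (prd D Y X) Z \<Longrightarrow> a \<in> Hom C V X \<Longrightarrow>
   Cmp C V X (ex D Y Z) (transp C D Y X Z f) a =
   transp C D Y V Z (Cmp C (prd D Y V) (prd D Y X) Z f
      (pair C D Y X (prd D Y V) (pr1 D Y V) (Cmp C (prd D Y V) V X a (pr2 D Y V))))"
proof (rule tr_uniq)
  assume a: "Y \<in> Obj C" "Z \<in> Obj C" "X \<in> Obj C" "V \<in> Obj C" "f \<in> Hom C (prd D Y X) Z" "a \<in> Hom C V X"
  let ?P = "pair C D Y X (prd D Y V) (pr1 D Y V) (Cmp C (prd D Y V) V X a (pr2 D Y V))"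
  let ?t = "transp C D Y X Z f"
  let ?Q = "pair C D Y (ex D Y Z) (prd D Y X) (pr1 D Y X) (Cmp C (prd D Y X) X (ex D Y Z) ?t (pr2 D Y X))"
  have "Cmp C (prd D Y V) (prd D Y (ex D Y Z)) Z (evl D Y Z)
     (pair C D Y (ex D Y Z) (prd D Y V) (pr1 D Y V) (Cmp C (prd D Y V) V (ex D Y Z) (Cmp C V X (ex D Y Z) ?t a) (pr2 D Y V)))
     = Cmp C (prd D Y V) (prd D Y (ex D Y Z)) Z (evl D Y Z) (Cmp C (prd D Y V) (prd D Y X) (prd D Y (ex D Y Z)) ?Q ?P)"
    using a by simp
  also have "\<dots> = Cmp C (prd D Y V) (prd D Y X) Z (Cmp C (prd D Y X) (prd D Y (ex D Y Z)) Z (evl D Y Z) ?Q) ?P"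
    by (rule assoc[symmetric]) (use a in simp_all)
  also have "\<dots> = Cmp C (prd D Y V) (prd D Y X) Z f ?P" using a by (simp only: tr_beta0)
  finally show "Cmp C (prd D Y V) (prd D Y (ex D Y Z)) Z (evl D Y Z)
     (pair C D Y (ex D Y Z) (prd D Y V) (pr1 D Y V) (Cmp C (prd D Y V) V (ex D Y Z) (Cmp C V X (ex D Y Z) ?t a) (pr2 D Y V)))
     = Cmp C (prd D Y V) (prd D Y X) Z f ?P" .
qed (auto)

lemma tr_beta[simp]: "Y \<in> Obj C \<Longrightarrow> Z \<in> Obj C \<Longrightarrow> V \<in> Obj C \<Longrightarrow>
   f \<in> Hom C (prd D Y V) Z \<Longrightarrow> a \<in> Hom C V Y \<Longrightarrow>
   Cmp C V (prd D Y (ex D Y Z)) Z (evl D Y Z) (pair C D Y (ex D Y Z) V a (transp C D Y V Z f)) =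
   Cmp C V (prd D Y V) Z f (pair C D Y V V a (Idt C V))"
proof -
  assume a: "Y \<in> Obj C" "Z \<in> Obj C" "V \<in> Obj C" "f \<in> Hom C (prd D Y V) Z" "a \<in> Hom C V Y"
  let ?t = "transp C D Y V Z f"
  let ?P = "pair C D Y V V a (Idt C V)"
  let ?Q = "pair C D Y (ex D Y Z) (prd D Y V) (pr1 D Y V) (Cmp C (prd D Y V) V (ex D Y Z) ?t (pr2 D Y V))"
  have "Cmp C V (prd D Y (ex D Y Z)) Z (evl D Y Z) (pair C D Y (ex D Y Z) V a ?t) =
        Cmp C V (prd D Y (ex D Y Z)) Z (evl D Y Z) (Cmp C V (prd D Y V) (prd D Y (ex D Y Z)) ?Q ?P)"
    using a by (simp del: tr_cmp)
  also have "\<dots> = Cmp C V (prd D Y V) Z (Cmp C (prd D Y V) (prd D Y (ex D Y Z)) Z (evl D Y Z) ?Q) ?P"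
    by (rule assoc[symmetric]) (use a in simp_all)
  also have "\<dots> = Cmp C V (prd D Y V) Z f ?P" using a by (simp only: tr_beta0)
  finally show ?thesis .
qed

end

context cc begin

lemmas unf = expmap_def Tar_def unitT_def multT_def Tob_def Kob_def Kar_def

lemma K_alg1: "S \<in> Obj C \<Longrightarrow> Y \<in> Obj C \<Longrightarrow>
  Cmp C (Tob D S (Tob D S (ex D S Y))) (Tob D S (ex D S Y)) (ex D S Y) (expmap C D S (prd D S (ex D S Y)) Y (evl D S Y))
    (Tar C D S (Tob D S (ex D S Y)) (ex D S Y) (expmap C D S (prd D S (ex D S Y)) Y (evl D S Y))) =
  Cmp C (Tob D S (Tob D S (ex D S Y))) (Tob D S (ex D S Y)) (ex D S Y) (expmap C D S (prd D S (ex D S Y)) Y (evl D S Y))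
    (multT C D S (ex D S Y))"
  by (simp add: unf)

end

definition kk :: "('o, 'a) cat \<Rightarrow> ('o, 'a) ccc_data \<Rightarrow> 'o \<Rightarrow> 'o \<Rightarrow> 'a" where
  "kk C D S X = transp C D S (prd D S X) (prd D S X) (pr2 D S (prd D S X))"

context cc begin

lemma Tob_obj: "S \<in> Obj C \<Longrightarrow> X \<in> Obj C \<Longrightarrow> Tob D S X \<in> Obj C" by (simp add: Tob_def)
declare Tob_def[simp]

lemma Tar_hom[simp]: "S \<in> Obj C \<Longrightarrow> X \<in> Obj C \<Longrightarrow> Y \<in> Obj C \<Longrightarrow> f \<in> Hom C X Y \<Longrightarrow>
  Tar C D S X Y f \<in> Hom C (ex D S (prd D S X)) (ex D S (prd D S Y))" by (simp add: unf)
lemma multT_hom[simp]: "S \<in> Obj C \<Longrightarrow> X \<in> Obj C \<Longrightarrow> multT C D S X \<in> Hom C (ex D S (prd D S (ex D S (prd D S X)))) (ex D S (prd D S X))"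
  by (simp add: unf)
lemma unitT_hom[simp]: "S \<in> Obj C \<Longrightarrow> X \<in> Obj C \<Longrightarrow> unitT C D S X \<in> Hom C X (ex D S (prd D S X))"
  by (simp add: unf)
lemma expmap_hom[simp]: "S \<in> Obj C \<Longrightarrow> X \<in> Obj C \<Longrightarrow> Y \<in> Obj C \<Longrightarrow> f \<in> Hom C X Y \<Longrightarrow>
  expmap C D S X Y f \<in> Hom C (ex D S X) (ex D S Y)" by (simp add: unf)

lemma Tar_id[simp]: "S \<in> Obj C \<Longrightarrow> X \<in> Obj C \<Longrightarrow> Tar C D S X X (Idt C X) = Idt C (Tob D S X)"
  by (simp add: unf)
lemma Tar_cmp: "S \<in> Obj C \<Longrightarrow> X \<in> Obj C \<Longrightarrow> Y \<in> Obj C \<Longrightarrow> Z \<in> Obj C \<Longrightarrow> f \<in> Hom C X Y \<Longrightarrow> g \<in> Hom C Y Z \<Longrightarrow>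
  Tar C D S X Z (Cmp C X Y Z g f) = Cmp C (Tob D S X) (Tob D S Y) (Tob D S Z) (Tar C D S Y Z g) (Tar C D S X Y f)"
  by (simp add: unf)
lemma expmap_id[simp]: "S \<in> Obj C \<Longrightarrow> X \<in> Obj C \<Longrightarrow> expmap C D S X X (Idt C X) = Idt C (ex D S X)"
  by (simp add: unf)
lemma expmap_cmp: "S \<in> Obj C \<Longrightarrow> X \<in> Obj C \<Longrightarrow> Y \<in> Obj C \<Longrightarrow> Z \<in> Obj C \<Longrightarrow> f \<in> Hom C X Y \<Longrightarrow> g \<in> Hom C Y Z \<Longrightarrow>
  expmap C D S X Z (Cmp C X Y Z g f) = Cmp C (ex D S X) (ex D S Y) (ex D S Z) (expmap C D S Y Z g) (expmap C D S X Y f)"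
  by (simp add: unf)

lemma AlgT_Obj: "(x \<in> Obj (AlgT C D S)) = (fst x \<in> Obj C \<and> snd x \<in> Hom C (Tob D S (fst x)) (fst x) \<and>
   Cmp C (Tob D S (Tob D S (fst x))) (Tob D S (fst x)) (fst x) (snd x) (Tar C D S (Tob D S (fst x)) (fst x) (snd x)) =
   Cmp C (Tob D S (Tob D S (fst x))) (Tob D S (fst x)) (fst x) (snd x) (multT C D S (fst x)) \<and>
   Cmp C (fst x) (Tob D S (fst x)) (fst x) (snd x) (unitT C D S (fst x)) = Idt C (fst x))"
  by (cases x) (simp add: AlgT_def)
lemma AlgT_Hom: "Hom (AlgT C D S) x y = {u \<in> Hom C (fst x) (fst y).
   Cmp C (Tob D S (fst x)) (Tob D S (fst y)) (fst y) (snd y) (Tar C D S (fst x) (fst y) u) =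
   Cmp C (Tob D S (fst x)) (fst x) (fst y) u (snd x)}"
  by (cases x; cases y) (simp add: AlgT_def)
lemma AlgT_Cmp: "Cmp (AlgT C D S) x y z g f = Cmp C (fst x) (fst y) (fst z) g f"
  by (cases x; cases y; cases z) (simp add: AlgT_def)
lemma AlgT_Idt: "Idt (AlgT C D S) x = Idt C (fst x)"
  by (cases x) (simp add: AlgT_def)

lemma AlgT_Obj': "((x, h) \<in> Obj (AlgT C D S)) = (x \<in> Obj C \<and> h \<in> Hom C (Tob D S x) x \<and>
   Cmp C (Tob D S (Tob D S x)) (Tob D S x) x h (Tar C D S (Tob D S x) x h) =
   Cmp C (Tob D S (Tob D S x)) (Tob D S x) x h (multT C D S x) \<and>
   Cmp C x (Tob D S x) x h (unitT C D S x) = Idt C x)"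
  by (simp add: AlgT_def)
lemma AlgT_Hom': "(u \<in> Hom (AlgT C D S) (x, h) (y, k)) = (u \<in> Hom C x y \<and>
   Cmp C (Tob D S x) (Tob D S y) y k (Tar C D S x y u) = Cmp C (Tob D S x) x y u h)"
  by (simp add: AlgT_def)

lemma AlgT_cmp_hom: assumes S: "S \<in> Obj C" and o: "x \<in> Obj C" "y \<in> Obj C" "z \<in> Obj C"
  "h \<in> Hom C (Tob D S x) x" "k \<in> Hom C (Tob D S y) y" "l \<in> Hom C (Tob D S z) z"
  and f: "f \<in> Hom (AlgT C D S) (x, h) (y, k)" and g: "g \<in> Hom (AlgT C D S) (y, k) (z, l)"
  shows "Cmp C x y z g f \<in> Hom (AlgT C D S) (x, h) (z, l)"
proof -
  have fh: "f \<in> Hom C x y" and f1: "Cmp C (Tob D S x) (Tob D S y) y k (Tar C D S x y f) = Cmp C (Tob D S x) x y f h"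
    using f by (auto simp: AlgT_Hom')
  have gh: "g \<in> Hom C y z" and g1: "Cmp C (Tob D S y) (Tob D S z) z l (Tar C D S y z g) = Cmp C (Tob D S y) y z g k"
    using g by (auto simp: AlgT_Hom')
  have "Cmp C (Tob D S x) (Tob D S z) z l (Tar C D S x z (Cmp C x y z g f)) =
     Cmp C (Tob D S x) (Tob D S y) z (Cmp C (Tob D S y) (Tob D S z) z l (Tar C D S y z g)) (Tar C D S x y f)"
    using o fh gh S by (simp add: Tar_cmp)
  also have "\<dots> = Cmp C (Tob D S x) (Tob D S y) z (Cmp C (Tob D S y) y z g k) (Tar C D S x y f)" by (simp only: g1)
  also have "\<dots> = Cmp C (Tob D S x) y z g (Cmp C (Tob D S x) (Tob D S y) y k (Tar C D S x y f))"
    using o fh gh S by simp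
  also have "\<dots> = Cmp C (Tob D S x) y z g (Cmp C (Tob D S x) x y f h)" by (simp only: f1)
  also have "\<dots> = Cmp C (Tob D S x) x z (Cmp C x y z g f) h" using o fh gh S by simp
  finally show ?thesis using o fh gh by (simp add: AlgT_Hom')
qed

lemma AlgT_cat: assumes S: "S \<in> Obj C" shows "category (AlgT C D S)"
  unfolding category_def Ball_def split_paired_All AlgT_Cmp AlgT_Idt fst_conv
proof (intro conjI allI impI)
  fix x h assume "(x, h) \<in> Obj (AlgT C D S)"
  then show "Idt C x \<in> Hom (AlgT C D S) (x, h) (x, h)" using S by (simp add: AlgT_Obj' AlgT_Hom')
next
  fix x h y k z l f g assume "(x, h) \<in> Obj (AlgT C D S)" "(y, k) \<in> Obj (AlgT C D S)" "(z, l) \<in> Obj (AlgT C D S)"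
    "f \<in> Hom (AlgT C D S) (x, h) (y, k)" "g \<in> Hom (AlgT C D S) (y, k) (z, l)"
  then show "Cmp C x y z g f \<in> Hom (AlgT C D S) (x, h) (z, l)"
    by (intro AlgT_cmp_hom[OF S]) (simp_all add: AlgT_Obj')
next
  fix x h y k f assume "(x, h) \<in> Obj (AlgT C D S)" "(y, k) \<in> Obj (AlgT C D S)" "f \<in> Hom (AlgT C D S) (x, h) (y, k)"
  then show "Cmp C x y y (Idt C y) f = f" by (simp add: AlgT_Obj' AlgT_Hom')
next
  fix x h y k f assume "(x, h) \<in> Obj (AlgT C D S)" "(y, k) \<in> Obj (AlgT C D S)" "f \<in> Hom (AlgT C D S) (x, h) (y, k)"
  then show "Cmp C x x y f (Idt C x) = f" by (simp add: AlgT_Obj' AlgT_Hom')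
next
  fix w h x h' y k z l f g i assume "(w, h) \<in> Obj (AlgT C D S)" "(x, h') \<in> Obj (AlgT C D S)"
    "(y, k) \<in> Obj (AlgT C D S)" "(z, l) \<in> Obj (AlgT C D S)"
    "f \<in> Hom (AlgT C D S) (w, h) (x, h')" "g \<in> Hom (AlgT C D S) (x, h') (y, k)" "i \<in> Hom (AlgT C D S) (y, k) (z, l)"
  then show "Cmp C w y z i (Cmp C w x y g f) = Cmp C w x z (Cmp C x y z i g) f" by (simp add: AlgT_Obj' AlgT_Hom')
qed

lemma K_functor: assumes S: "S \<in> Obj C" shows "is_functor C (AlgT C D S) (Kob C D S) (Kar C D S)"
  unfolding is_functor_def Kob_def Kar_def AlgT_Cmp AlgT_Idt fst_conv
proof (intro conjI ballI allI impI)
  fix Y assume Y: "Y \<in> Obj C"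
  show "(ex D S Y, expmap C D S (prd D S (ex D S Y)) Y (evl D S Y)) \<in> Obj (AlgT C D S)"
    using S Y by (simp add: AlgT_Obj' unf)
  show "expmap C D S Y Y (Idt C Y) = Idt C (ex D S Y)" using S Y by simp
next
  fix Y Y' g assume a: "Y \<in> Obj C" "Y' \<in> Obj C" "g \<in> Hom C Y Y'"
  show "expmap C D S Y Y' g \<in> Hom (AlgT C D S) (ex D S Y, expmap C D S (prd D S (ex D S Y)) Y (evl D S Y))
           (ex D S Y', expmap C D S (prd D S (ex D S Y')) Y' (evl D S Y'))"
    using S a by (simp add: AlgT_Hom' unf)
next
  fix X Y Z f g assume a: "X \<in> Obj C" "Y \<in> Obj C" "Z \<in> Obj C" "f \<in> Hom C X Y" "g \<in> Hom C Y Z"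
  show "expmap C D S X Z (Cmp C X Y Z g f) = Cmp C (ex D S X) (ex D S Y) (ex D S Z) (expmap C D S Y Z g) (expmap C D S X Y f)"
    using S a by (simp add: expmap_cmp)
qed

lemma K_faithful: assumes S: "S \<in> Obj C" and s: "s \<in> Hom C (one D) S"
  and a: "Y \<in> Obj C" "Y' \<in> Obj C" "g \<in> Hom C Y Y'" "g' \<in> Hom C Y Y'"
  and e: "Kar C D S Y Y' g = Kar C D S Y Y' g'"
  shows "g = g'"
proof -
  have "\<And>g. g \<in> Hom C Y Y' \<Longrightarrow> g = Cmp C Y (prd D S (ex D S Y')) Y' (evl D S Y')
     (pair C D S (ex D S Y') Y (Cmp C Y (one D) S s (trm C D Y))
        (Cmp C Y (ex D S Y) (ex D S Y') (Kar C D S Y Y' g) (transp C D S Y Y (pr2 D S Y))))"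
    using S s a by (simp add: unf)
  then show ?thesis using e a by metis
qed

lemma K_full: assumes S: "S \<in> Obj C" and s: "s \<in> Hom C (one D) S"
  and a: "Y \<in> Obj C" "Y' \<in> Obj C"
  and u: "u \<in> Hom (AlgT C D S) (Kob C D S Y) (Kob C D S Y')"
  shows "\<exists>g\<in>Hom C Y Y'. Kar C D S Y Y' g = u"
proof -
  let ?E = "ex D S Y" and ?E' = "ex D S Y'"
  let ?\<epsilon> = "expmap C D S (prd D S ?E) Y (evl D S Y)"
  let ?\<epsilon>' = "expmap C D S (prd D S ?E') Y' (evl D S Y')"
  have uh: "u \<in> Hom C ?E ?E'" and u1: "Cmp C (Tob D S ?E) (Tob D S ?E') ?E' ?\<epsilon>' (Tar C D S ?E ?E' u) =
     Cmp C (Tob D S ?E) ?E ?E' u ?\<epsilon>" using u by (auto simp: Kob_def AlgT_Hom')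
  let ?k = "kk C D S ?E"
  have kh: "?k \<in> Hom C (prd D S ?E) (Tob D S ?E)" using S a by (simp add: kk_def Tob_def)
  have u2: "Cmp C (prd D S ?E) ?E ?E' u (Cmp C (prd D S ?E) (Tob D S ?E) ?E ?\<epsilon> ?k) =
    Cmp C (prd D S ?E) (Tob D S ?E') ?E' ?\<epsilon>' (Cmp C (prd D S ?E) (Tob D S ?E) (Tob D S ?E') (Tar C D S ?E ?E' u) ?k)"
  proof -
    have "Cmp C (prd D S ?E) ?E ?E' u (Cmp C (prd D S ?E) (Tob D S ?E) ?E ?\<epsilon> ?k) =
      Cmp C (prd D S ?E) (Tob D S ?E) ?E' (Cmp C (Tob D S ?E) ?E ?E' u ?\<epsilon>) ?k"
      by (rule assoc[symmetric]) (use S a kh uh in \<open>simp_all add: Tob_def\<close>)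
    also have "\<dots> = Cmp C (prd D S ?E) (Tob D S ?E) ?E' (Cmp C (Tob D S ?E) (Tob D S ?E') ?E' ?\<epsilon>' (Tar C D S ?E ?E' u)) ?k"
      by (simp only: u1)
    also have "\<dots> = Cmp C (prd D S ?E) (Tob D S ?E') ?E' ?\<epsilon>' (Cmp C (prd D S ?E) (Tob D S ?E) (Tob D S ?E') (Tar C D S ?E ?E' u) ?k)"
      by (rule assoc) (use S a kh uh in \<open>simp_all add: Tob_def\<close>)
    finally show ?thesis .
  qed
  define g where "g = Cmp C Y (prd D S ?E') Y' (evl D S Y')
     (pair C D S ?E' Y (Cmp C Y (one D) S s (trm C D Y))
        (Cmp C Y ?E ?E' u (transp C D S Y Y (pr2 D S Y))))"
  have gh: "g \<in> Hom C Y Y'" unfolding g_def using S s a uh by simp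
  have "Cmp C (prd D S ?E) Y Y' g (evl D S Y) = Cmp C (prd D S ?E) (prd D S ?E') Y' (evl D S Y')
     (pair C D S ?E' (prd D S ?E) (Cmp C (prd D S ?E) (one D) S s (trm C D (prd D S ?E)))
        (Cmp C (prd D S ?E) ?E ?E' u (Cmp C (prd D S ?E) (Tob D S ?E) ?E ?\<epsilon> ?k)))"
    unfolding g_def using S s a uh by (simp add: unf kk_def)
  also have "\<dots> = Cmp C (prd D S ?E) (prd D S ?E') Y' (evl D S Y')
     (pair C D S ?E' (prd D S ?E) (Cmp C (prd D S ?E) (one D) S s (trm C D (prd D S ?E)))
        (Cmp C (prd D S ?E) (Tob D S ?E') ?E' ?\<epsilon>' (Cmp C (prd D S ?E) (Tob D S ?E) (Tob D S ?E') (Tar C D S ?E ?E' u) ?k)))"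
    by (simp only: u2)
  also have "\<dots> = Cmp C (prd D S ?E) (prd D S ?E') Y' (evl D S Y')
      (pair C D S ?E' (prd D S ?E) (pr1 D S ?E) (Cmp C (prd D S ?E) ?E ?E' u (pr2 D S ?E)))"
    using S s a uh by (simp add: unf kk_def)
  finally have ge: "Cmp C (prd D S ?E) Y Y' g (evl D S Y) = Cmp C (prd D S ?E) (prd D S ?E') Y' (evl D S Y')
      (pair C D S ?E' (prd D S ?E) (pr1 D S ?E) (Cmp C (prd D S ?E) ?E ?E' u (pr2 D S ?E)))" .
  have "Kar C D S Y Y' g = u"
    unfolding Kar_def expmap_def ge using S a uh by simp
  then show ?thesis using gh by blast
qed

end

definition cst :: "('o, 'a) cat \<Rightarrow> ('o, 'a) ccc_data \<Rightarrow> 'o \<Rightarrow> 'a \<Rightarrow> 'o \<Rightarrow> 'a" where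
  "cst C D S s X = transp C D S X (prd D S X) (pair C D S X (prd D S X)
     (Cmp C (prd D S X) (one D) S s (trm C D (prd D S X))) (pr2 D S X))"

locale algc = cc +
  fixes S :: 'o and s :: 'a and X :: 'o and h :: 'a
  assumes S[simp]: "S \<in> Obj C" and s[simp]: "s \<in> Hom C (one D) S" and X[simp]: "X \<in> Obj C"
  and h[simp]: "h \<in> Hom C (ex D S (prd D S X)) X"
  and A1: "Cmp C (ex D S (prd D S (ex D S (prd D S X)))) (ex D S (prd D S X)) X h (Tar C D S (ex D S (prd D S X)) X h) =
           Cmp C (ex D S (prd D S (ex D S (prd D S X)))) (ex D S (prd D S X)) X h (multT C D S X)"
  and A2: "Cmp C X (ex D S (prd D S X)) X h (unitT C D S X) = Idt C X"
begin

abbreviation "PX \<equiv> prd D S X"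
abbreviation "TX \<equiv> ex D S PX"
abbreviation "PTX \<equiv> prd D S TX"
abbreviation "TTX \<equiv> ex D S PTX"

lemma A1z: "V \<in> Obj C \<Longrightarrow> z \<in> Hom C V TTX \<Longrightarrow>
  Cmp C V TX X h (Cmp C V TTX TX (Tar C D S TX X h) z) = Cmp C V TX X h (Cmp C V TTX TX (multT C D S X) z)"
proof -
  assume a: "V \<in> Obj C" "z \<in> Hom C V TTX"
  have "Cmp C V TX X h (Cmp C V TTX TX (Tar C D S TX X h) z) = Cmp C V TTX X (Cmp C TTX TX X h (Tar C D S TX X h)) z"
    by (rule assoc[symmetric]) (use a in simp_all)
  also have "\<dots> = Cmp C V TTX X (Cmp C TTX TX X h (multT C D S X)) z" using A1 by simp
  also have "\<dots> = Cmp C V TX X h (Cmp C V TTX TX (multT C D S X) z)"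
    by (rule assoc) (use a in simp_all)
  finally show ?thesis .
qed

lemma A2n[simp]: "Cmp C X TX X h (transp C D S X PX (Idt C PX)) = Idt C X"
  using A2 by (simp add: unitT_def)

lemma A2z[simp]: "V \<in> Obj C \<Longrightarrow> z \<in> Hom C V X \<Longrightarrow>
  Cmp C V TX X h (transp C D S V PX (pair C D S X (prd D S V) (pr1 D S V) (Cmp C (prd D S V) V X z (pr2 D S V)))) = z"
proof -
  assume a: "V \<in> Obj C" "z \<in> Hom C V X"
  have "Cmp C V TX X h (transp C D S V PX (pair C D S X (prd D S V) (pr1 D S V) (Cmp C (prd D S V) V X z (pr2 D S V)))) =
        Cmp C V TX X h (Cmp C V X TX (transp C D S X PX (Idt C PX)) z)" using a by simp
  also have "\<dots> = Cmp C V X X (Cmp C X TX X h (transp C D S X PX (Idt C PX))) z"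
    by (rule assoc[symmetric]) (use a in simp_all)
  also have "\<dots> = z" using a by simp
  finally show ?thesis .
qed

definition "c = cst C D S s X"
definition "cT = cst C D S s TX"
definition "e = Cmp C X TX X h c"

lemma c_hom[simp]: "c \<in> Hom C X TX" by (simp add: c_def cst_def)
lemma cT_hom[simp]: "cT \<in> Hom C TX TTX" by (simp add: cT_def cst_def)
lemma e_hom[simp]: "e \<in> Hom C X X" by (simp add: e_def)

lemma ee: "Cmp C X X X e e = e"
proof -
  have "Cmp C X X X e e = Cmp C X TX X h (Cmp C X X TX c (Cmp C X TX X h c))" by (simp add: e_def)
  also have "\<dots> = Cmp C X TX X h (Cmp C X TTX TX (Tar C D S TX X h) (Cmp C X TX TTX cT c))"
    by (simp add: c_def cT_def cst_def unf)
  also have "\<dots> = Cmp C X TX X h (Cmp C X TTX TX (multT C D S X) (Cmp C X TX TTX cT c))"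
    by (rule A1z) simp_all
  also have "\<dots> = e"
    by (simp add: c_def cT_def cst_def unf e_def)
  finally show ?thesis .
qed

lemma kk_hom[simp]: "Z \<in> Obj C \<Longrightarrow> kk C D S Z \<in> Hom C (prd D S Z) (ex D S (prd D S Z))"
  by (simp add: kk_def)

lemma L1w: assumes a: "V \<in> Obj C" "a \<in> Hom C V S" "w \<in> Hom C V TX"
  shows "Cmp C V TX X h (Cmp C V PX TX (kk C D S X) (pair C D S X V a (Cmp C V TX X h w))) =
         Cmp C V TX X h (Cmp C V PX TX (kk C D S X) (Cmp C V PTX PX (evl D S PX) (pair C D S TX V a w)))"
proof -
  have "Cmp C V TX X h (Cmp C V PX TX (kk C D S X) (pair C D S X V a (Cmp C V TX X h w))) =
     Cmp C V TX X h (Cmp C V TTX TX (Tar C D S TX X h) (Cmp C V PTX TTX (kk C D S TX) (pair C D S TX V a w)))"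
    using a by (simp add: kk_def unf)
  also have "\<dots> = Cmp C V TX X h (Cmp C V TTX TX (multT C D S X) (Cmp C V PTX TTX (kk C D S TX) (pair C D S TX V a w)))"
    by (rule A1z) (use a in simp_all)
  also have "\<dots> = Cmp C V TX X h (Cmp C V PX TX (kk C D S X) (Cmp C V PTX PX (evl D S PX) (pair C D S TX V a w)))"
    using a by (simp add: kk_def unf)
  finally show ?thesis .
qed

lemma Lehk: "Cmp C PX TX X h (Cmp C PX X TX c (Cmp C PX TX X h (kk C D S X))) = Cmp C PX TX X h (kk C D S X)"
proof -
  have "Cmp C PX TX X h (Cmp C PX X TX c (Cmp C PX TX X h (kk C D S X))) =
        Cmp C PX TX X h (Cmp C PX TTX TX (Tar C D S TX X h) (Cmp C PX TX TTX cT (kk C D S X)))"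
    by (simp add: c_def cT_def cst_def unf kk_def)
  also have "\<dots> = Cmp C PX TX X h (Cmp C PX TTX TX (multT C D S X) (Cmp C PX TX TTX cT (kk C D S X)))"
    by (rule A1z) simp_all
  also have "\<dots> = Cmp C PX TX X h (kk C D S X)"
    by (simp add: c_def cT_def cst_def unf kk_def)
  finally show ?thesis .
qed

end

locale algf = algc +
  fixes Y and q and m
  assumes Y[simp]: "Y \<in> Obj C" and q[simp]: "q \<in> Hom C X Y" and m[simp]: "m \<in> Hom C Y X"
  and qm: "Cmp C Y X Y q m = Idt C Y" and mq: "Cmp C X Y X m q = e"
begin

abbreviation "EY \<equiv> ex D S Y"

lemma qmz: "V \<in> Obj C \<Longrightarrow> z \<in> Hom C V Y \<Longrightarrow> Cmp C V X Y q (Cmp C V Y X m z) = z"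
  by (metis qm assoc idl q m Y X)

lemma mqz: "V \<in> Obj C \<Longrightarrow> z \<in> Hom C V X \<Longrightarrow> Cmp C V Y X m (Cmp C V X Y q z) = Cmp C V TX X h (Cmp C V X TX c z)"
proof -
  assume a: "V \<in> Obj C" "z \<in> Hom C V X"
  have "Cmp C V Y X m (Cmp C V X Y q z) = Cmp C V X X (Cmp C X Y X m q) z" by (rule assoc[symmetric]) (use a in simp_all)
  also have "\<dots> = Cmp C V X X e z" by (simp only: mq)
  also have "\<dots> = Cmp C V TX X h (Cmp C V X TX c z)" using a by (simp add: e_def)
  finally show ?thesis .
qed

lemma mez: "V \<in> Obj C \<Longrightarrow> b \<in> Hom C V Y \<Longrightarrow> Cmp C V TX X h (Cmp C V X TX c (Cmp C V Y X m b)) = Cmp C V Y X m b"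
proof -
  assume a: "V \<in> Obj C" "b \<in> Hom C V Y"
  have "Cmp C V TX X h (Cmp C V X TX c (Cmp C V Y X m b)) = Cmp C V Y X m (Cmp C V X Y q (Cmp C V Y X m b))"
    using a by (simp add: mqz)
  also have "\<dots> = Cmp C V Y X m b" using a by (simp add: qmz)
  finally show ?thesis .
qed

lemma L2m: assumes a: "V \<in> Obj C" "a \<in> Hom C V S" "b \<in> Hom C V Y"
  shows "Cmp C V TX X h (Cmp C V PX TX (kk C D S X) (pair C D S X V a (Cmp C V Y X m b))) = Cmp C V Y X m b"
proof -
  have "Cmp C V TX X h (Cmp C V PX TX (kk C D S X) (pair C D S X V a (Cmp C V Y X m b))) =
        Cmp C V TX X h (Cmp C V PX TX (kk C D S X) (pair C D S X V a (Cmp C V TX X h (Cmp C V X TX c (Cmp C V Y X m b)))))"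
    using a by (simp add: mez)
  also have "\<dots> = Cmp C V TX X h (Cmp C V PX TX (kk C D S X) (Cmp C V PTX PX (evl D S PX) (pair C D S TX V a (Cmp C V X TX c (Cmp C V Y X m b)))))"
    using L1w[of V a "Cmp C V X TX c (Cmp C V Y X m b)"] a by simp
  also have "\<dots> = Cmp C V TX X h (Cmp C V X TX c (Cmp C V Y X m b))"
    using a by (simp add: kk_def c_def cst_def)
  also have "\<dots> = Cmp C V Y X m b" using a by (simp add: mez)
  finally show ?thesis .
qed

definition "\<phi> = transp C D S X Y (Cmp C PX X Y q (Cmp C PX TX X h (kk C D S X)))"
definition "\<psi> = Cmp C EY TX X h (transp C D S EY PX (pair C D S X (prd D S EY) (pr1 D S EY) (Cmp C (prd D S EY) Y X m (evl D S Y))))"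

lemma \<phi>_hom[simp]: "\<phi> \<in> Hom C X EY" by (simp add: \<phi>_def)
lemma \<psi>_hom[simp]: "\<psi> \<in> Hom C EY X" by (simp add: \<psi>_def)

lemma \<psi>\<phi>: "Cmp C X EY X \<psi> \<phi> = Idt C X"
proof -
  have "Cmp C X EY X \<psi> \<phi> = Cmp C X TX X h (transp C D S X PX (pair C D S X PX (pr1 D S X) (Cmp C PX TX X h (kk C D S X))))"
    using mqz Lehk by (simp add: \<phi>_def \<psi>_def)
  also have "\<dots> = Cmp C X TX X h (Cmp C X TTX TX (Tar C D S TX X h) (transp C D S X PTX (pair C D S TX PX (pr1 D S X) (kk C D S X))))"
    by (simp add: unf)
  also have "\<dots> = Cmp C X TX X h (Cmp C X TTX TX (multT C D S X) (transp C D S X PTX (pair C D S TX PX (pr1 D S X) (kk C D S X))))"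
    by (rule A1z) simp_all
  also have "\<dots> = Idt C X" by (simp add: unf kk_def)
  finally show ?thesis .
qed

lemma \<phi>\<psi>: "Cmp C EY X EY \<phi> \<psi> = Idt C EY"
proof -
  let ?P = "prd D S EY"
  let ?W = "Cmp C ?P EY TX (transp C D S EY PX (pair C D S X ?P (pr1 D S EY) (Cmp C ?P Y X m (evl D S Y)))) (pr2 D S EY)"
  have W: "?W \<in> Hom C ?P TX" by simp
  have "Cmp C EY X EY \<phi> \<psi> = transp C D S EY Y (Cmp C ?P X Y q (Cmp C ?P TX X h (Cmp C ?P PX TX (kk C D S X)
      (pair C D S X ?P (pr1 D S EY) (Cmp C ?P TX X h ?W)))))"
    by (simp add: \<phi>_def \<psi>_def)
  also have "\<dots> = transp C D S EY Y (Cmp C ?P X Y q (Cmp C ?P TX X h (Cmp C ?P PX TX (kk C D S X)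
      (Cmp C ?P PTX PX (evl D S PX) (pair C D S TX ?P (pr1 D S EY) ?W)))))"
    by (simp only: L1w[of ?P "pr1 D S EY" ?W, OF _ _ W] prd_obj ex_obj S Y pr1_hom)
  also have "\<dots> = Idt C EY"
    using L2m qmz by simp
  finally show ?thesis .
qed

lemma \<phi>_alg: "Cmp C TX (ex D S (prd D S EY)) EY (expmap C D S (prd D S EY) Y (evl D S Y)) (Tar C D S X EY \<phi>) =
   Cmp C TX X EY \<phi> h"
proof -
  have "Cmp C TX (ex D S (prd D S EY)) EY (expmap C D S (prd D S EY) Y (evl D S Y)) (Tar C D S X EY \<phi>) =
     transp C D S TX Y (Cmp C PTX X Y q (Cmp C PTX TX X h (Cmp C PTX PX TX (kk C D S X) (Cmp C PTX PTX PX (evl D S PX) (pair C D S TX PTX (pr1 D S TX) (pr2 D S TX))))))"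
    by (simp add: unf \<phi>_def)
  also have "\<dots> = transp C D S TX Y (Cmp C PTX X Y q (Cmp C PTX TX X h (Cmp C PTX PX TX (kk C D S X) (pair C D S X PTX (pr1 D S TX) (Cmp C PTX TX X h (pr2 D S TX))))))"
    by (simp only: L1w[of PTX "pr1 D S TX" "pr2 D S TX", symmetric] prd_obj ex_obj S X pr1_hom pr2_hom)
  also have "\<dots> = Cmp C TX X EY \<phi> h" by (simp add: \<phi>_def)
  finally show ?thesis .
qed

end

context cc begin

lemma alg_inv: assumes S: "S \<in> Obj C" and o: "x \<in> Obj C" "y \<in> Obj C"
  "h \<in> Hom C (ex D S (prd D S x)) x" "k \<in> Hom C (ex D S (prd D S y)) y"
  and f: "f \<in> Hom (AlgT C D S) (x, h) (y, k)" and g: "g \<in> Hom C y x"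
  and gf: "Cmp C x y x g f = Idt C x" and fg: "Cmp C y x y f g = Idt C y"
  shows "g \<in> Hom (AlgT C D S) (y, k) (x, h)"
proof -
  let ?Tx = "ex D S (prd D S x)" and ?Ty = "ex D S (prd D S y)"
  have fh: "f \<in> Hom C x y" and f1: "Cmp C ?Tx ?Ty y k (Tar C D S x y f) = Cmp C ?Tx x y f h"
    using f by (auto simp: AlgT_Hom')
  have s1: "Cmp C ?Ty ?Tx ?Ty (Tar C D S x y f) (Tar C D S y x g) = Idt C ?Ty"
    using Tar_cmp[of S y x y g f] S o fh g fg by simp
  have gfz: "\<And>V z. V \<in> Obj C \<Longrightarrow> z \<in> Hom C V x \<Longrightarrow> Cmp C V y x g (Cmp C V x y f z) = z"
    by (metis gf assoc idl o(1,2) fh g)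
  have "Cmp C ?Ty y x g k = Cmp C ?Ty y x g (Cmp C ?Ty ?Ty y k (Cmp C ?Ty ?Tx ?Ty (Tar C D S x y f) (Tar C D S y x g)))"
    using S o by (simp add: s1)
  also have "\<dots> = Cmp C ?Ty y x g (Cmp C ?Ty ?Tx y (Cmp C ?Tx ?Ty y k (Tar C D S x y f)) (Tar C D S y x g))"
    using S o fh g by simp
  also have "\<dots> = Cmp C ?Ty y x g (Cmp C ?Ty ?Tx y (Cmp C ?Tx x y f h) (Tar C D S y x g))"
    by (simp only: f1)
  also have "\<dots> = Cmp C ?Ty ?Tx x h (Tar C D S y x g)"
    using S o fh g by (simp add: gfz)
  finally show ?thesis using g by (simp add: AlgT_Hom')
qed

lemma regepi_epi: assumes r: "regular_epi C B E q" and o: "B \<in> Obj C" "E \<in> Obj C" "Z \<in> Obj C"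
  and u: "u \<in> Hom C E Z" and v: "v \<in> Hom C E Z" and uv: "Cmp C B E Z u q = Cmp C B E Z v q"
  shows "u = v"
proof -
  obtain A f g where A: "A \<in> Obj C" and f: "f \<in> Hom C A B" and g: "g \<in> Hom C A B"
    and fg: "Cmp C A B E q f = Cmp C A B E q g"
    and un: "\<forall>Z\<in>Obj C. \<forall>k\<in>Hom C B Z. Cmp C A B Z k f = Cmp C A B Z k g \<longrightarrow>
           (\<exists>!u. u \<in> Hom C E Z \<and> Cmp C B E Z u q = k)"
    using r unfolding regular_epi_def by blast
  have qh: "q \<in> Hom C B E" using r unfolding regular_epi_def by blast
  let ?k = "Cmp C B E Z u q"
  have kh: "?k \<in> Hom C B Z" using o u qh by simp
  have "Cmp C A B Z ?k f = Cmp C A B Z ?k g"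
    using o A f g u qh fg by simp
  then have P: "\<exists>!w. w \<in> Hom C E Z \<and> Cmp C B E Z w q = ?k" using un o kh by blast
  have 1: "(THE w. w \<in> Hom C E Z \<and> Cmp C B E Z w q = ?k) = u" by (rule the1_equality[OF P]) (simp add: u)
  have 2: "(THE w. w \<in> Hom C E Z \<and> Cmp C B E Z w q = ?k) = v" by (rule the1_equality[OF P]) (simp add: v uv)
  show ?thesis using 1 2 by simp
qed

end

context algc begin

lemma split: assumes fac: "has_regular_epi_mono_factorizations C"
  shows "\<exists>Y q m. algf C D S s X h Y q m"
proof -
  obtain Y q m where Y: "Y \<in> Obj C" and r: "regular_epi C X Y q" and mo: "mono C Y X m"
     and mq: "Cmp C X Y X m q = e"
    using fac e_hom X unfolding has_regular_epi_mono_factorizations_def by blast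
  have qh: "q \<in> Hom C X Y" using r unfolding regular_epi_def by blast
  have mh: "m \<in> Hom C Y X" using mo unfolding mono_def by blast
  have "Cmp C X X X (Cmp C X Y X m q) (Cmp C X Y X m q) = Cmp C X Y X m q" using ee mq by simp
  then have 0: "Cmp C X Y X m (Cmp C X X Y q (Cmp C X Y X m q)) = Cmp C X Y X m q" using Y qh mh by simp
  have mono': "\<And>g h'. g \<in> Hom C X Y \<Longrightarrow> h' \<in> Hom C X Y \<Longrightarrow> Cmp C X Y X m g = Cmp C X Y X m h' \<Longrightarrow> g = h'"
    using mo X unfolding mono_def by blast
  have "Cmp C X X Y q (Cmp C X Y X m q) = q" by (rule mono'[OF _ _ 0]) (use Y qh mh in simp_all)
  then have 1: "Cmp C X Y Y (Cmp C Y X Y q m) q = Cmp C X Y Y (Idt C Y) q"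
    using Y qh mh by simp
  have qm: "Cmp C Y X Y q m = Idt C Y"
    by (rule regepi_epi[OF r X Y Y _ _ 1]) (use Y qh mh in simp_all)
  have "algf C D S s X h Y q m"
    by (rule algf.intro, rule algc_axioms) (unfold_locales, simp_all add: Y qh mh qm mq)
  then show ?thesis by blast
qed

end

context algf begin

lemma iso_ex: "iso (AlgT C D S) (Kob C D S Y) (X, h) \<psi>"
proof -
  have K: "(EY, expmap C D S (prd D S EY) Y (evl D S Y)) \<in> Obj (AlgT C D S)"
    using K_functor[OF S] Y unfolding is_functor_def Kob_def by blast
  have fa: "\<phi> \<in> Hom (AlgT C D S) (X, h) (EY, expmap C D S (prd D S EY) Y (evl D S Y))"
    using \<phi>_alg by (simp add: AlgT_Hom')
  have ga: "\<psi> \<in> Hom (AlgT C D S) (EY, expmap C D S (prd D S EY) Y (evl D S Y)) (X, h)"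
    by (rule alg_inv[OF S X _ h _ fa \<psi>_hom \<psi>\<phi> \<phi>\<psi>]) (simp_all add: unf)
  show ?thesis unfolding iso_def Kob_def AlgT_Cmp AlgT_Idt fst_conv
    using fa ga \<phi>\<psi> \<psi>\<phi> by blast
qed

end

context cc begin

lemma K_eso: assumes S: "S \<in> Obj C" and s: "s \<in> Hom C (one D) S" and fac: "has_regular_epi_mono_factorizations C"
  and b: "b \<in> Obj (AlgT C D S)"
  shows "\<exists>Y\<in>Obj C. \<exists>\<psi>. iso (AlgT C D S) (Kob C D S Y) b \<psi>"
proof -
  obtain x h where bx: "b = (x, h)" by force
  have "algc C D S s x h"
    using b S s unfolding bx AlgT_Obj'
    by (intro algc.intro cc_axioms) (unfold_locales, simp_all add: Tob_def)
  then interpret a: algc C D S s x h .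
  obtain Y q m where "algf C D S s x h Y q m" using a.split[OF fac] by blast
  then interpret f: algf C D S s x h Y q m .
  show ?thesis using f.iso_ex f.Y unfolding bx by blast
qed

end

theorem mainTheorem11:
  fixes C :: "('o, 'a) cat" and D :: "('o, 'a) ccc_data" and S :: 'o
  assumes "category C"
    and "cartesian_closed C D"
    and "has_regular_epi_mono_factorizations C"
    and "S \<in> Obj C"
    and "\<exists>s. s \<in> Hom C (one D) S"
  shows "equivalence C (AlgT C D S) (Kob C D S) (Kar C D S)"
proof -
  interpret cc C D by (rule cc.intro) (use assms in auto)
  obtain s where s: "s \<in> Hom C (one D) S" using assms by blast
  show ?thesis
  proof (rule equiv_ffe)
    show "category C" by (rule assms(1))
    show "category (AlgT C D S)" by (rule AlgT_cat[OF assms(4)])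
    show "is_functor C (AlgT C D S) (Kob C D S) (Kar C D S)" by (rule K_functor[OF assms(4)])
    show "\<forall>X\<in>Obj C. \<forall>Y\<in>Obj C. \<forall>f\<in>Hom C X Y. \<forall>g\<in>Hom C X Y. Kar C D S X Y f = Kar C D S X Y g \<longrightarrow> f = g"
      using K_faithful[OF assms(4) s] by blast
    show "\<forall>X\<in>Obj C. \<forall>Y\<in>Obj C. \<forall>g\<in>Hom (AlgT C D S) (Kob C D S X) (Kob C D S Y). \<exists>f\<in>Hom C X Y. Kar C D S X Y f = g"
      using K_full[OF assms(4) s] by blast
    show "\<forall>b\<in>Obj (AlgT C D S). \<exists>X\<in>Obj C. \<exists>\<phi>. iso (AlgT C D S) (Kob C D S X) b \<phi>"
      using K_eso[OF assms(4) s assms(3)] by blast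
  qed
qed

end
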